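(* Let $\mathcal H$ and $\mathcal H'$ be the rank-one-root affine Hecke algebras described in the context. There is no algebra homomorphism $I:\mathcal H\to\mathcal H'$ such that $I(T_s)=c'\theta_{k(\alpha')^\vee}T_{s'}+b'$ for some $c'\in\mathbb C^\times$, $k\in\frac12\mathbb Z$ and $b'\in\mathbb C[Y']$, and $I(\theta_{\alpha^\vee})=c\,\theta_{n(\alpha')^\vee}$ for some $c\in\mathbb C^\times$ and positive half-integer $n\in\frac12+\mathbb Z$ (here $k(\alpha')^\vee,n(\alpha')^\vee\in Y'$).
   Context: Let $\mathcal R=(X,R=\{\pm\alpha\},Y,R^\vee=\{\pm\alpha^\vee\},\Delta=\{\alpha\})$ and $\mathcal R'=(X',\{\pm\alpha'\},Y',\{\pm(\alpha')^\vee\},\{\alpha'\})$ be based root data (free $\mathbb Z$-modules of finite rank in perfect pairing, $\langle\alpha,\alpha^\vee\rangle=2$). Let $\lambda(\alpha),\lambda^*(\alpha),\lambda'(\alpha'),(\lambda^* )'(\alpha')$ be positive reals with $\lambda(\alpha)=\lambda^*(\alpha)$ unless $\alpha\in2X$ and $\lambda'(\alpha')=(\lambda^* )'(\alpha')$ unless $\alpha'\in2X'$. Fix $\mathbf q>1$; $q_1=\mathbf q^{\lambda(\alpha)}$, $q_0=\mathbf q^{\lambda^*(\alpha)}$, $q_1'=\mathbf q^{\lambda'(\alpha')}$, $q_0'=\mathbf q^{(\lambda^* )'(\alpha')}$. $s=s_\alpha$, $s'=s_{\alpha'}$. $\mathcal H=\mathbb C[Y]\otimes\mathcal H(W_0,q)$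 with $\mathbb C[Y]$ (basis $\theta_y$) and $\operatorname{span}(1,T_s)$, $(T_s+1)(T_s-q_1)=0$, as subalgebras and $\theta_yT_s-T_s\theta_{s(y)}=\big((q_1-1)+\theta_{-\alpha^\vee}(q_1^{1/2}q_0^{1/2}-q_1^{1/2}q_0^{-1/2})\big)\frac{\theta_y-\theta_{s(y)}}{\theta_0-\theta_{-2\alpha^\vee}}$; $\mathcal H'$ likewise from $\mathcal R',q_1',q_0'$ with generator $T_{s'}$. *)

theory Defs
  imports "HOL-Analysis.Finite_Cartesian_Product" "HOL-Library.Poly_Mapping"
begin

text \<open>Lattices: Y = Z^r is modelled as int ^ 'r, X = Hom(Y,Z) is identified with int ^ 'r
  via the standard (perfect) pairing below.\<close>

definition lat_pair :: "int ^ ('r::finite) \<Rightarrow> int ^ 'r \<Rightarrow> int" where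
  "lat_pair x y = (\<Sum>i\<in>UNIV. x $ i * y $ i)"

definition refl_Y :: "int ^ ('r::finite) \<Rightarrow> int ^ 'r \<Rightarrow> int ^ 'r \<Rightarrow> int ^ 'r" where
  "refl_Y a av y = y - (lat_pair a y) *s av"

type_synonym 'r grpalg = "(int ^ 'r) \<Rightarrow>\<^sub>0 complex"

definition theta :: "int ^ ('r::finite) \<Rightarrow> 'r grpalg" where
  "theta y = Poly_Mapping.single y 1"

definition cst :: "complex \<Rightarrow> ('r::finite) grpalg" where
  "cst c = Poly_Mapping.single 0 c"

definition sact :: "int ^ ('r::finite) \<Rightarrow> int ^ 'r \<Rightarrow> 'r grpalg \<Rightarrow> 'r grpalg" where
  "sact a av f = (\<Sum>y\<in>Poly_Mapping.keys f. Poly_Mapping.single (refl_Y a av y) (Poly_Mapping.lookup f y))"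

text \<open>Bernstein operator: Bop f = ((q1-1) + theta(-av)(q1^(1/2)q0^(1/2) - q1^(1/2)q0^(-1/2)))
  (f - s f) / (theta 0 - theta(-2 av)), the quotient taken in the integral domain C[Y]
  (it is exact). So theta_y T_s - T_s theta_(s y) = Bop (theta_y).\<close>
definition bern_num :: "int ^ ('r::finite) \<Rightarrow> real \<Rightarrow> real \<Rightarrow> 'r grpalg" where
  "bern_num av q1 q0 = cst (complex_of_real (q1 - 1))
     + theta (- av) * cst (complex_of_real (sqrt q1 * sqrt q0 - sqrt q1 / sqrt q0))"

definition bern_den :: "int ^ ('r::finite) \<Rightarrow> 'r grpalg" where
  "bern_den av = theta 0 - theta (- ((2::int) *s av))"

definition Bop :: "int ^ ('r::finite) \<Rightarrow> int ^ 'r \<Rightarrow> real \<Rightarrow> real \<Rightarrow> 'r grpalg \<Rightarrow> 'r grpalg" where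
  "Bop a av q1 q0 f = (THE g. bern_den av * g = bern_num av q1 q0 * (f - sact a av f))"

text \<open>The affine Hecke algebra H = C[Y] (x) span(1,T_s): an element (f,g) stands for f + g T_s.
  Multiplication is the one forced by the relations
  (T_s+1)(T_s-q1)=0 and T_s f = s(f) T_s - Bop(s f).\<close>
type_synonym 'r hecke = "'r grpalg \<times> 'r grpalg"

definition H_mult :: "int ^ ('r::finite) \<Rightarrow> int ^ 'r \<Rightarrow> real \<Rightarrow> real \<Rightarrow> 'r hecke \<Rightarrow> 'r hecke \<Rightarrow> 'r hecke" where
  "H_mult a av q1 q0 x y = (case x of (f1, g1) \<Rightarrow> case y of (f2, g2) \<Rightarrow>
     (f1 * f2 - g1 * Bop a av q1 q0 (sact a av f2) + cst (complex_of_real q1) * g1 * sact a av g2,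
      f1 * g2 + g1 * sact a av f2 + cst (complex_of_real (q1 - 1)) * g1 * sact a av g2
        - g1 * Bop a av q1 q0 (sact a av g2)))"

definition H_add :: "('r::finite) hecke \<Rightarrow> 'r hecke \<Rightarrow> 'r hecke" where
  "H_add x y = (fst x + fst y, snd x + snd y)"

definition H_scale :: "complex \<Rightarrow> ('r::finite) hecke \<Rightarrow> 'r hecke" where
  "H_scale c x = (cst c * fst x, cst c * snd x)"

definition H_one :: "('r::finite) hecke" where
  "H_one = (1, 0)"

definition H_of :: "('r::finite) grpalg \<Rightarrow> 'r hecke" where
  "H_of f = (f, 0)"

definition H_T :: "('r::finite) hecke" where
  "H_T = (0, 1)"

definition hecke_alg_hom ::
  "int ^ ('r::finite) \<Rightarrow> int ^ 'r \<Rightarrow> real \<Rightarrow> real \<Rightarrow> int ^ ('s::finite) \<Rightarrow> int ^ 's \<Rightarrow> real \<Rightarrow> real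
     \<Rightarrow> ('r hecke \<Rightarrow> 's hecke) \<Rightarrow> bool" where
  "hecke_alg_hom a av q1 q0 a' av' q1' q0' I \<longleftrightarrow>
     (\<forall>x y. I (H_add x y) = H_add (I x) (I y)) \<and>
     (\<forall>c x. I (H_scale c x) = H_scale c (I x)) \<and>
     (\<forall>x y. I (H_mult a av q1 q0 x y) = H_mult a' av' q1' q0' (I x) (I y)) \<and>
     I H_one = H_one"

end

theory Submission
  imports Defs
begin


lemma pm_sum_singles:
  "f = (\<Sum>y\<in>Poly_Mapping.keys f. Poly_Mapping.single y (Poly_Mapping.lookup f y))"
  by (rule poly_mapping_eqI) (simp add: lookup_sum lookup_single when_def sum.delta' in_keys_iff)

lemma lookup_single_mult:
  fixes h :: "int ^ ('r::finite) \<Rightarrow>\<^sub>0 complex"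
  shows "Poly_Mapping.lookup (Poly_Mapping.single w c * h) y = c * Poly_Mapping.lookup h (y - w)"
proof -
  have "Poly_Mapping.single w c * h =
     (\<Sum>x\<in>Poly_Mapping.keys h. Poly_Mapping.single (w + x) (c * Poly_Mapping.lookup h x))"
    by (subst pm_sum_singles[of h]) (simp add: sum_distrib_left mult_single)
  note S = this
  have L: "Poly_Mapping.lookup (Poly_Mapping.single w c * h) y =
     (\<Sum>x\<in>Poly_Mapping.keys h. (if x = y - w then c * Poly_Mapping.lookup h x else 0))"
  proof -
    have e: "(x + w = y) = (x = y - w)" for x :: "int ^ 'r" by (auto simp: algebra_simps)
    show ?thesis by (subst S) (simp add: lookup_sum lookup_single when_def e add.commute)
  qed
  also have "\<dots> = c * Poly_Mapping.lookup h (y - w)"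
    by (simp add: sum.delta' in_keys_iff)
  finally show ?thesis .
qed

lemma theta_mult: "theta x * theta y = theta (x + y)"
  by (simp add: theta_def mult_single)

lemma theta_zero: "theta 0 = 1"
  by (simp add: theta_def)

lemma cst_theta: "cst c * theta y = Poly_Mapping.single y c"
  by (simp add: theta_def cst_def mult_single)

lemma cst_mult: "cst a * cst b = cst (a * b)"
  by (simp add: cst_def mult_single)
lemma cst_add: "cst (a + b) = cst a + cst b"
  by (simp add: cst_def single_add)
lemma cst_diff: "cst (a - b) = cst a - cst b"
  by (simp add: cst_def single_diff)
lemma cst_one: "cst 1 = 1"
  by (simp add: cst_def)
lemma cst_zero: "cst 0 = 0"
  by (simp add: cst_def)

lemma periodic_zero:
  fixes h :: "int ^ ('r::finite) \<Rightarrow>\<^sub>0 complex"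
  assumes w: "w \<noteq> 0" and h: "(theta 0 - theta w) * h = 0"
  shows "h = 0"
proof (rule ccontr)
  assume "h \<noteq> 0"
  then obtain y where y: "Poly_Mapping.lookup h y \<noteq> 0"
    by (metis poly_mapping_eqI lookup_zero)
  have hh: "h = theta w * h" using h by (simp add: algebra_simps theta_zero)
  have sh: "Poly_Mapping.lookup h x = Poly_Mapping.lookup h (x - w)" for x
    by (subst hh) (simp add: theta_def lookup_single_mult)
  have per: "Poly_Mapping.lookup h (y - of_nat k *s w) = Poly_Mapping.lookup h y" for k
  proof (induction k)
    case 0 then show ?case by simp
  next
    case (Suc k)
    have "y - of_nat (Suc k) *s w = (y - of_nat k *s w) - w"
      by (simp add: vec_eq_iff algebra_simps)
    then show ?case using Suc sh[of "y - of_nat k *s w"] by metis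
  qed
  obtain i where i: "w $ i \<noteq> 0" using w by (metis vec_eq_iff zero_index)
  have inj: "inj (\<lambda>k::nat. y - of_nat k *s w)"
  proof (rule injI)
    fix k l :: nat assume "y - of_nat k *s w = y - of_nat l *s w"
    then have "(y - of_nat k *s w) $ i = (y - of_nat l *s w) $ i" by simp
    then have "of_nat k * w $ i = of_nat l * w $ i" by simp
    then show "k = l" using i by simp
  qed
  have "range (\<lambda>k::nat. y - of_nat k *s w) \<subseteq> Poly_Mapping.keys h"
    using per y by (auto simp: in_keys_iff)
  then have "finite (range (\<lambda>k::nat. y - of_nat k *s w))"
    using finite_subset finite_keys by blast
  then show False using inj by (simp add: finite_image_iff)
qed

lemma Bop_eq:
  fixes av :: "int ^ ('r::finite)"
  assumes av: "av \<noteq> 0" and e: "bern_den av * v = bern_num av q1 q0 * (f - sact a av f)"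
  shows "Bop a av q1 q0 f = v"
  unfolding Bop_def
proof (rule the_equality)
  show "bern_den av * v = bern_num av q1 q0 * (f - sact a av f)" by (rule e)
next
  fix g assume g: "bern_den av * g = bern_num av q1 q0 * (f - sact a av f)"
  have w: "- ((2::int) *s av) \<noteq> 0"
  proof
    assume "- ((2::int) *s av) = 0"
    then have "av = 0" by (simp add: vec_eq_iff)
    with av show False by simp
  qed
  have "(theta 0 - theta (- ((2::int) *s av))) * (g - v) = 0"
  proof -
    have "bern_den av * (g - v) = 0" using g e by (simp add: right_diff_distrib)
    then show ?thesis by (simp add: bern_den_def)
  qed
  then have "g - v = 0" by (rule periodic_zero[OF w])
  then show "g = v" by simp
qed

lemma sact_single: "sact a av (Poly_Mapping.single y c) = Poly_Mapping.single (refl_Y a av y) c"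
  by (cases "c = 0") (simp_all add: sact_def)

lemma sact_zero: "sact a av 0 = 0"
  by (simp add: sact_def)

definition ev :: "(int ^ ('s::finite) \<Rightarrow> complex) \<Rightarrow> (int ^ 's \<Rightarrow>\<^sub>0 complex) \<Rightarrow> complex" where
  "ev ch f = (\<Sum>y\<in>Poly_Mapping.keys f. Poly_Mapping.lookup f y * ch y)"

lemma ev_superset:
  assumes "finite A" "Poly_Mapping.keys f \<subseteq> A"
  shows "ev ch f = (\<Sum>y\<in>A. Poly_Mapping.lookup f y * ch y)"
  unfolding ev_def
  by (rule sum.mono_neutral_left) (use assms in \<open>auto simp: in_keys_iff\<close>)

lemma ev_add: "ev ch (f + g) = ev ch f + ev ch g"
proof -
  let ?A = "Poly_Mapping.keys f \<union> Poly_Mapping.keys g"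
  have "ev ch (f + g) = (\<Sum>y\<in>?A. Poly_Mapping.lookup (f + g) y * ch y)"
    by (rule ev_superset) (auto simp: in_keys_iff lookup_add)
  also have "\<dots> = (\<Sum>y\<in>?A. Poly_Mapping.lookup f y * ch y) + (\<Sum>y\<in>?A. Poly_Mapping.lookup g y * ch y)"
    by (simp add: lookup_add algebra_simps sum.distrib)
  also have "\<dots> = ev ch f + ev ch g"
    by (simp add: ev_superset[of "Poly_Mapping.keys f \<union> Poly_Mapping.keys g"])
  finally show ?thesis .
qed

lemma ev_zero: "ev ch 0 = 0" by (simp add: ev_def)

lemma ev_uminus: "ev ch (- f) = - ev ch f"
  by (simp add: ev_def sum_negf)

lemma ev_diff: "ev ch (f - g) = ev ch f - ev ch g"
  using ev_add[of ch f "- g"] by (simp add: ev_uminus)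

lemma ev_sum: "ev ch (\<Sum>j\<in>A. F j) = (\<Sum>j\<in>A. ev ch (F j))"
  by (induction A rule: infinite_finite_induct) (simp_all add: ev_zero ev_add)

lemma ev_single: "ev ch (Poly_Mapping.single y c) = c * ch y"
  by (cases "c = 0") (simp_all add: ev_def)

lemma ev_single_mult:
  assumes chi: "\<And>x y. ch (x + y) = ch x * ch y"
  shows "ev ch (Poly_Mapping.single w c * f) = c * ch w * ev ch f"
proof -
  have k: "Poly_Mapping.keys (Poly_Mapping.single w c * f) \<subseteq> (\<lambda>x. w + x) ` Poly_Mapping.keys f"
  proof
    fix y assume "y \<in> Poly_Mapping.keys (Poly_Mapping.single w c * f)"
    then have "Poly_Mapping.lookup f (y - w) \<noteq> 0" by (simp add: in_keys_iff lookup_single_mult)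
    then show "y \<in> (\<lambda>x. w + x) ` Poly_Mapping.keys f"
      by (intro image_eqI[of _ _ "y - w"]) (auto simp: in_keys_iff)
  qed
  have "ev ch (Poly_Mapping.single w c * f) =
      (\<Sum>y\<in>(\<lambda>x. w + x) ` Poly_Mapping.keys f. Poly_Mapping.lookup (Poly_Mapping.single w c * f) y * ch y)"
    by (rule ev_superset[OF _ k]) simp
  also have "\<dots> = (\<Sum>x\<in>Poly_Mapping.keys f. Poly_Mapping.lookup (Poly_Mapping.single w c * f) (w + x) * ch (w + x))"
    by (rule sum.reindex_cong[of "\<lambda>x. w + x"]) (auto simp: inj_on_def)
  also have "\<dots> = (\<Sum>x\<in>Poly_Mapping.keys f. c * ch w * (Poly_Mapping.lookup f x * ch x))"
  proof (rule sum.cong)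
    fix x
    have "Poly_Mapping.lookup (Poly_Mapping.single w c * f) (w + x) = c * Poly_Mapping.lookup f x"
      by (simp add: lookup_single_mult)
    then show "Poly_Mapping.lookup (Poly_Mapping.single w c * f) (w + x) * ch (w + x) =
        c * ch w * (Poly_Mapping.lookup f x * ch x)" by (simp add: chi)
  qed simp
  also have "\<dots> = c * ch w * ev ch f"
    by (simp add: ev_def sum_distrib_left)
  finally show ?thesis .
qed



lemma ring_id1:
  fixes T Ti A D :: "'a::comm_ring_1" assumes h: "T*Ti = 1"
  shows "(1 - Ti*Ti)*(-(A*T+D)) = (A + Ti*D)*(Ti - T)"
proof -
  have "(1 - Ti*Ti)*(-(A*T+D)) = (A + Ti*D)*(Ti - T) + (A*Ti + D)*(T*Ti - 1)"
    by (simp add: algebra_simps)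
  then show ?thesis using h by simp
qed

lemma ring_id2:
  fixes E S C Q Tn Tn' :: "'a::comm_ring_1" assumes h: "(1 - E) * S = Tn - Tn'"
  shows "(1 - E*E) * (-(C*Q*S)) = (Q + E*Q)*(C*Tn' - C*Tn)"
proof -
  have "(1 - E*E) * (-(C*Q*S)) = -((1+E)*C*Q*((1 - E) * S))" by (simp add: algebra_simps)
  also have "\<dots> = -((1+E)*C*Q*(Tn - Tn'))" by (simp only: h)
  also have "\<dots> = (Q + E*Q)*(C*Tn' - C*Tn)" by (simp add: algebra_simps)
  finally show ?thesis .
qed

lemma lat_add: "lat_pair x (y + z) = lat_pair x y + lat_pair x z"
  by (simp add: lat_pair_def algebra_simps sum.distrib)
lemma lat_add1: "lat_pair (x + x') y = lat_pair x y + lat_pair x' y"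
  by (simp add: lat_pair_def algebra_simps sum.distrib)
lemma lat_smult: "lat_pair x (k *s y) = k * lat_pair x y"
  by (simp add: lat_pair_def sum_distrib_left mult_ac)
lemma lat_uminus: "lat_pair x (- y) = - lat_pair x y"
  by (simp add: lat_pair_def sum_negf)
lemma lat_diff: "lat_pair x (y - z) = lat_pair x y - lat_pair x z"
  by (simp add: lat_pair_def sum_subtractf algebra_simps)
lemma lat_zero: "lat_pair x 0 = 0"
  by (simp add: lat_pair_def)

lemma sact_theta: "sact a av (theta y) = theta (refl_Y a av y)"
  by (simp add: theta_def sact_single)

lemma Bop_zero:
  assumes "av \<noteq> 0" shows "Bop a av q1 q0 0 = 0"
  by (rule Bop_eq[OF assms]) (simp add: sact_zero)



theorem lemmaD3:
  fixes a av :: "int ^ ('r::finite)" and a' av' :: "int ^ ('s::finite)"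
    and qq lam lamS lam' lamS' :: real
  assumes "lat_pair a av = 2" and "lat_pair a' av' = 2"
    and "qq > 1"
    and "lam > 0" and "lamS > 0" and "lam' > 0" and "lamS' > 0"
    and "\<not> (\<exists>x. a = x + x) \<Longrightarrow> lam = lamS"
    and "\<not> (\<exists>x. a' = x + x) \<Longrightarrow> lam' = lamS'"
  shows "\<not> (\<exists>I c c' (K::int) (N::int) yk yn b'.
            hecke_alg_hom a av (qq powr lam) (qq powr lamS) a' av' (qq powr lam') (qq powr lamS') I
          \<and> c \<noteq> 0 \<and> c' \<noteq> 0
          \<and> yk + yk = K *s av'
          \<and> odd N \<and> N > 0 \<and> yn + yn = N *s av'
          \<and> I H_T = H_add (H_mult a' av' (qq powr lam') (qq powr lamS') (H_of (cst c' * theta yk)) H_T)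
                          (H_of b')
          \<and> I (H_of (theta av)) = H_of (cst c * theta yn))"
proof
  assume "\<exists>I c c' (K::int) (N::int) yk yn b'.
            hecke_alg_hom a av (qq powr lam) (qq powr lamS) a' av' (qq powr lam') (qq powr lamS') I
          \<and> c \<noteq> 0 \<and> c' \<noteq> 0
          \<and> yk + yk = K *s av'
          \<and> odd N \<and> N > 0 \<and> yn + yn = N *s av'
          \<and> I H_T = H_add (H_mult a' av' (qq powr lam') (qq powr lamS') (H_of (cst c' * theta yk)) H_T)
                          (H_of b')
          \<and> I (H_of (theta av)) = H_of (cst c * theta yn)"
  then obtain I c c' K N yk yn b' where
    hom: "hecke_alg_hom a av (qq powr lam) (qq powr lamS) a' av' (qq powr lam') (qq powr lamS') I"
    and c: "c \<noteq> 0" and c': "c' \<noteq> 0" and yk: "yk + yk = K *s av'"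
    and N: "odd N" "N > 0" and yn: "yn + yn = N *s av'"
    and IT: "I H_T = H_add (H_mult a' av' (qq powr lam') (qq powr lamS') (H_of (cst c' * theta yk)) H_T)
                          (H_of b')"
    and Ith: "I (H_of (theta av)) = H_of (cst c * theta yn)"
    by blast
  define q1 where "q1 = qq powr lam"
  define q0 where "q0 = qq powr lamS"
  define q' where "q' = qq powr lam'"
  have q1: "q1 > 1" unfolding q1_def using assms powr_less_mono[of 0 lam qq] by simp
  have q0: "q0 > 1" unfolding q0_def using assms powr_less_mono[of 0 lamS qq] by simp
  have q': "q' > 1" unfolding q'_def using assms powr_less_mono[of 0 lam' qq] by simp
  have pyn: "lat_pair a' yn = N"
  proof -
    have "lat_pair a' (yn + yn) = N * 2" using yn assms(2) by (simp add: lat_smult)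
    then have "lat_pair a' yn + lat_pair a' yn = N * 2" by (simp only: lat_add)
    then show ?thesis by linarith
  qed
  have pyk: "lat_pair a' yk = K"
  proof -
    have "lat_pair a' (yk + yk) = K * 2" using yk assms(2) by (simp add: lat_smult)
    then have "lat_pair a' yk + lat_pair a' yk = K * 2" by (simp only: lat_add)
    then show ?thesis by linarith
  qed
  have lamS': "lamS' = lam'"
  proof -
    define z where "z = yn - ((N - 1) div 2) *s av'"
    have "lat_pair a' z = N - ((N - 1) div 2) * 2" unfolding z_def
      using pyn assms(2) by (simp add: lat_diff lat_smult)
    also have "\<dots> = 1" using N by (auto elim!: oddE)
    finally have z1: "lat_pair a' z = 1" .
    have "\<not> (\<exists>x. a' = x + x)"
    proof
      assume "\<exists>x. a' = x + x"
      then obtain x where "a' = x + x" by blast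
      then have "lat_pair a' z = lat_pair x z + lat_pair x z" by (simp only: lat_add1)
      with z1 show False by presburger
    qed
    then show ?thesis using assms(9) by simp
  qed
  have av0: "av \<noteq> 0" using assms(1) by (auto simp: lat_zero)
  have av'0: "av' \<noteq> 0" using assms(2) by (auto simp: lat_zero)
  define T where "T = theta av"
  define Ti where "Ti = theta (- av)"
  have TTi: "T * Ti = 1" by (simp add: T_def Ti_def theta_mult theta_zero)
  have TiTi: "Ti * Ti = theta (- ((2::int) *s av))"
  proof -
    have "- av + - av = - ((2::int) *s av)" by (simp only: vec_eq_iff) simp
    then show ?thesis by (simp only: Ti_def theta_mult)
  qed
  have rav: "refl_Y a av av = - av" using assms(1) by (simp add: refl_Y_def vec_eq_iff)
  have rmav: "refl_Y a av (- av) = av" using assms(1) by (simp add: refl_Y_def vec_eq_iff lat_uminus)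
  have sT: "sact a av T = Ti" by (simp add: T_def Ti_def sact_theta rav)
  have sTi: "sact a av Ti = T" by (simp add: T_def Ti_def sact_theta rmav)
  define dd where "dd = complex_of_real (sqrt q1 * sqrt q0 - sqrt q1 / sqrt q0)"
  define A :: "'r grpalg" where "A = cst (complex_of_real (q1 - 1))"
  define D :: "'r grpalg" where "D = cst dd"
  have BTi: "Bop a av q1 q0 Ti = - (A * T + D)"
  proof (rule Bop_eq[OF av0])
    have "bern_den av = 1 - Ti * Ti" by (simp add: bern_den_def TiTi theta_zero)
    moreover have "bern_num av q1 q0 = A + Ti * D" by (simp add: bern_num_def A_def D_def dd_def Ti_def)
    ultimately show "bern_den av * - (A * T + D) = bern_num av q1 q0 * (Ti - sact a av Ti)"
      by (simp only: sTi ring_id1[OF TTi])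
  qed
  have P: "H_mult a av q1 q0 (H_mult a av q1 q0 (H_of T) H_T) (H_of T) =
     H_add H_T (H_add (H_scale (complex_of_real (q1 - 1)) (H_mult a av q1 q0 (H_of T) (H_of T)))
        (H_scale dd (H_of T)))"
    by (simp add: H_mult_def H_of_def H_T_def H_add_def H_scale_def sT BTi Bop_zero[OF av0] sact_zero TTi A_def D_def algebra_simps)
  define q'' where "q'' = qq powr lamS'"
  have q''q': "q'' = q'" by (simp add: q''_def q'_def lamS')
  define E :: "'s grpalg" where "E = theta (- av')"
  define n where "n = nat N"
  have nN: "int n = N" using N by (simp add: n_def)
  define S :: "'s grpalg" where "S = (\<Sum>j<n. theta (yn - int j *s av'))"
  have tele: "(1 - E) * S = theta yn - theta (- yn)"
  proof -
    have "(1 - E) * S = (\<Sum>j<n. theta (yn - int j *s av') - theta (yn - int (Suc j) *s av'))"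
    proof -
      have "E * theta (yn - int j *s av') = theta (yn - int (Suc j) *s av')" for j
      proof -
        have "- av' + (yn - int j *s av') = yn - int (Suc j) *s av'" by (simp add: vec_eq_iff algebra_simps)
        then show ?thesis by (simp only: E_def theta_mult)
      qed
      then show ?thesis by (simp add: S_def left_diff_distrib sum_distrib_left sum_subtractf)
    qed
    also have "\<dots> = theta (yn - int 0 *s av') - theta (yn - int n *s av')"
      by (rule sum_lessThan_telescope')
    also have "yn - int n *s av' = - yn" using yn nN by (simp add: vec_eq_iff)
    finally show ?thesis by simp
  qed
  have ryn: "refl_Y a' av' yn = - yn" using yn pyn by (simp add: refl_Y_def vec_eq_iff)
  have rmyn: "refl_Y a' av' (- yn) = yn" using yn pyn by (simp add: refl_Y_def vec_eq_iff lat_uminus)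
  define Q :: "'s grpalg" where "Q = cst (complex_of_real (q' - 1))"
  define V :: "'s grpalg" where "V = - (cst c * Q * S)"
  have BV: "Bop a' av' q' q' (Poly_Mapping.single (- yn) c) = V"
  proof (rule Bop_eq[OF av'0])
    have EE: "E * E = theta (- ((2::int) *s av'))"
    proof -
      have "- av' + - av' = - ((2::int) *s av')" by (simp only: vec_eq_iff) simp
      then show ?thesis by (simp only: E_def theta_mult)
    qed
    have "bern_den av' = 1 - E * E" by (simp add: bern_den_def EE theta_zero)
    moreover have "bern_num av' q' q' = Q + E * Q" using q'
      by (simp add: bern_num_def Q_def E_def mult.commute)
    moreover have "sact a' av' (Poly_Mapping.single (- yn) c) = cst c * theta yn"
      by (simp add: sact_single rmyn cst_theta)
    moreover have "Poly_Mapping.single (- yn) c = cst c * theta (- yn)" by (simp add: cst_theta)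
    ultimately show "bern_den av' * V = bern_num av' q' q' * (Poly_Mapping.single (- yn) c
        - sact a' av' (Poly_Mapping.single (- yn) c))"
      by (simp only: V_def ring_id2[OF tele])
  qed
  have hom': "hecke_alg_hom a av q1 q0 a' av' q' q' I"
    using hom by (simp add: q1_def q0_def q'_def lamS')
  have hadd: "\<And>x y. I (H_add x y) = H_add (I x) (I y)"
    and hscale: "\<And>k x. I (H_scale k x) = H_scale k (I x)"
    and hmult: "\<And>x y. I (H_mult a av q1 q0 x y) = H_mult a' av' q' q' (I x) (I y)"
    using hom' unfolding hecke_alg_hom_def by blast+
  define u :: "'s grpalg" where "u = Poly_Mapping.single yn c"
  define g :: "'s grpalg" where "g = Poly_Mapping.single yk c'"
  have ITh: "I (H_of T) = H_of u" using Ith by (simp add: T_def u_def cst_theta)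
  have IT': "I H_T = (b', g)" using IT
    by (simp add: H_mult_def H_of_def H_T_def H_add_def g_def cst_theta)
  have su: "sact a' av' u = Poly_Mapping.single (- yn) c" by (simp add: u_def sact_single ryn)
  have EQ: "H_mult a' av' q' q' (H_mult a' av' q' q' (H_of u) (b', g)) (H_of u) =
     H_add (b', g) (H_add (H_scale (complex_of_real (q1 - 1)) (H_mult a' av' q' q' (H_of u) (H_of u)))
        (H_scale dd (H_of u)))"
    using arg_cong[OF P, of I] by (simp only: hmult hadd hscale ITh IT')
  then have EQ1: "u * b' * u - u * g * V = b' + cst (complex_of_real (q1 - 1)) * (u * u) + cst dd * u"
    and EQ2: "u * g * Poly_Mapping.single (- yn) c = g"
    by (simp_all add: H_mult_def H_of_def H_add_def H_scale_def su BV Bop_zero[OF av'0] sact_zero)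
  have cc: "c * c = 1"
  proof -
    have "Poly_Mapping.single yk (c * c' * c) = Poly_Mapping.single yk c'"
      using EQ2 by (simp add: u_def g_def mult_single)
    then have "Poly_Mapping.lookup (Poly_Mapping.single yk (c * c' * c)) yk = Poly_Mapping.lookup (Poly_Mapping.single yk c') yk"
      by (rule arg_cong)
    then have "c * c' * c = c'" by simp
    then have "c' * (c * c - 1) = 0" by (simp add: algebra_simps)
    then show ?thesis using c' by simp
  qed
  have u2: "u * u = Poly_Mapping.single (yn + yn) (c * c)" by (simp add: u_def mult_single)
  define X where "X = c * c' * (c * complex_of_real (q' - 1))"
  have L1: "u * b' * u = Poly_Mapping.single (yn + yn) (c * c) * b'"
    by (simp only: u2[symmetric] mult_ac)
  have L2a: "u * g * (cst c * Q) = Poly_Mapping.single (yn + yk) X"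
    by (simp add: u_def g_def cst_def Q_def mult_single X_def)
  have L2: "u * g * V = - (Poly_Mapping.single (yn + yk) X * S)"
    by (simp only: V_def L2a[symmetric] mult_ac mult_minus_right)
  have R1: "cst (complex_of_real (q1 - 1)) * (u * u) = Poly_Mapping.single (yn + yn) (complex_of_real (q1 - 1) * (c * c))"
    by (simp only: u2 cst_def mult_single add_0)
  have R2: "cst dd * u = Poly_Mapping.single yn (dd * c)"
    by (simp only: u_def cst_def mult_single add_0)
  have EQ1': "Poly_Mapping.single (yn + yn) (c * c) * b' + Poly_Mapping.single (yn + yk) X * S =
      b' + Poly_Mapping.single (yn + yn) (complex_of_real (q1 - 1) * (c * c)) + Poly_Mapping.single yn (dd * c)"
    using EQ1 by (simp only: L1 L2 R1 R2 diff_minus_eq_add)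
  have key: "c' * complex_of_real (q' - 1) * of_nat n * ch yk = complex_of_real (q1 - 1) + dd * c * ch yn"
    if chm: "\<And>x y. ch (x + y) = ch x * ch y" and ch2: "ch (yn + yn) = 1"
      and chj: "\<And>j. ch (yn - int j *s av') = ch yn" and chs: "ch yn * ch yn = 1" for ch
  proof -
    have evS: "ev ch S = of_nat n * ch yn"
      by (simp add: S_def ev_sum theta_def ev_single chj)
    have "ev ch (Poly_Mapping.single (yn + yn) (c * c) * b' + Poly_Mapping.single (yn + yk) X * S) =
      ev ch (b' + Poly_Mapping.single (yn + yn) (complex_of_real (q1 - 1) * (c * c)) + Poly_Mapping.single yn (dd * c))"
      using EQ1' by simp
    then have "ev ch b' + X * (ch yn * ch yk) * (of_nat n * ch yn) =
        ev ch b' + complex_of_real (q1 - 1) + dd * c * ch yn"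
      using ch2 by (simp add: ev_add ev_single_mult[OF chm] ev_single evS cc chm)
    then have "X * (ch yn * ch yk) * (of_nat n * ch yn) = complex_of_real (q1 - 1) + dd * c * ch yn"
      by simp
    moreover have "X * (ch yn * ch yk) * (of_nat n * ch yn) = c' * complex_of_real (q' - 1) * of_nat n * ch yk * ((c * c) * (ch yn * ch yn))"
      by (simp add: X_def mult_ac)
    ultimately show ?thesis using cc chs by simp
  qed
  have k1: "c' * complex_of_real (q' - 1) * of_nat n = complex_of_real (q1 - 1) + dd * c"
    using key[of "\<lambda>_. 1"] by simp
  define ch2 :: "int ^ 's \<Rightarrow> complex" where "ch2 y = (if even (lat_pair a' y) then 1 else -1)" for y
  have m2: "ch2 (x + y) = ch2 x * ch2 y" for x y
    by (simp add: ch2_def lat_add)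
  have c22: "ch2 (yn + yn) = 1" unfolding ch2_def by (simp only: lat_add) simp
  have c2j: "ch2 (yn - int j *s av') = ch2 yn" for j
    using assms(2) by (simp add: ch2_def lat_diff lat_smult)
  have c2yn: "ch2 yn = -1" using N pyn by (simp add: ch2_def)
  have c2yk: "ch2 yk = (if even K then 1 else -1)" using pyk by (simp add: ch2_def)
  have k2: "c' * complex_of_real (q' - 1) * of_nat n * ch2 yk = complex_of_real (q1 - 1) - dd * c"
    using key[of ch2, OF m2 c22 c2j] c2yn by simp
  have dpos: "sqrt q1 * sqrt q0 - sqrt q1 / sqrt q0 > 0"
  proof -
    have s1: "sqrt q1 > 0" using q1 by simp
    have s0: "sqrt q0 > 1" using q0 by simp
    then have "1 / sqrt q0 < sqrt q0" using s0 by (simp add: field_simps)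
    then have "sqrt q1 * (1 / sqrt q0) < sqrt q1 * sqrt q0" using s1 by (rule mult_strict_left_mono)
    then show ?thesis by simp
  qed
  then have dd0: "dd \<noteq> 0" unfolding dd_def of_real_eq_0_iff by linarith
  have q10: "complex_of_real (q1 - 1) \<noteq> 0" using q1 by simp
  show False
  proof (cases "even K")
    case True
    then have "dd * c = 0" using k1 k2 c2yk by simp blast
    then show False using dd0 c by simp
  next
    case False
    then have "complex_of_real (q1 - 1) = 0" using k1 k2 c2yk by simp
    then show False using q10 by simp
  qed
qed
end
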